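(* Let $F$ be a field of characteristic $\neq 2$ and let $O$ be a Cayley algebra over $F$ which is a division algebra (i.e. has no zero divisors). Let $V=\operatorname{im}(O)$ and let $$\mathfrak{B}=\{\operatorname{im}(H)\colon H \text{ is a 4-dimensional associative subalgebra of } O\}.$$ Then $\dim V=7$, $\dim B=3$ for every $B\in\mathfrak{B}$, and every two-dimensional subspace $U\subseteq V$ is contained in exactly one element $B\in\mathfrak{B}$. In particular $(V,\mathfrak{B})$ is a $2$-$(7,3,1)$ subspace design ($q$-Fano plane) over $F$.
   Context: All algebras are finite-dimensional $F$-vector spaces with a bilinear (not necessarily associative) multiplication and a unit $1$; subalgebras contain $1$. An involution of an algebra $A$ is a linear map $a\mapsto a^*$ with $(ab)^*=b^*a^*$ and $(a^* )^*=a$. Cayley–Dickson algebras are defined inductively: $F$ with the identity involution is one; if $A$ is a Cayley–Dickson algebra with involution $*$ and $\gamma\in F^\times$, the Dickson double $D_\gamma(A)$ is the vector space $A\oplus A$, whose elements are written $a+ib$ ($a,b\in A$), with multiplication $(a+ib)(c+id)=(ac+\gamma\, d b^* )+i(a^*d+cb)$ and involution $(a+ib)^*=a^*-ib$; it is again a Cayley–Dickson algebra. A Cayley algebra is an 8-dimensional Cayley–Dickson algebra, i.e. $D_\gamma(D_\beta(D_\alpha(F)))$ with $\alpha,\beta,\gamma\in F^\times$. For a Cayley–Dickson algebra (or a subalgebra $H$ of one), $\operatorname{im}(H)=\{a\in H: a^*=-a\}$ (the imaginary elements); one has $O=F1\oplus\operatorname{im}(O)$. A $2$-$(v,k,1)$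 subspace design on a $v$-dimensional space $V$ is a set of $k$-dimensional subspaces such that every 2-dimensional subspace of $V$ lies in exactly one of them. *)

theory Defs
  imports Main "HOL.Vector_Spaces" "HOL-Library.Function_Algebras"
begin

text \<open>Elements of a Cayley--Dickson algebra built with parameter list ps
  (outermost doubling parameter first) are functions nat => F supported on
  indices below 2^(length ps).  Index block [0,n) is the A-part a, block [n,2n)
  the i-part b of a + i b.\<close>

definition cd_scale :: "'a::field \<Rightarrow> (nat \<Rightarrow> 'a) \<Rightarrow> (nat \<Rightarrow> 'a)" where
  "cd_scale c x = (\<lambda>i. c * x i)"

definition cd_lo :: "nat \<Rightarrow> (nat \<Rightarrow> 'a::zero) \<Rightarrow> (nat \<Rightarrow> 'a)" where
  "cd_lo n x = (\<lambda>i. if i < n then x i else 0)"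

definition cd_hi :: "nat \<Rightarrow> (nat \<Rightarrow> 'a::zero) \<Rightarrow> (nat \<Rightarrow> 'a)" where
  "cd_hi n x = (\<lambda>i. if i < n then x (i + n) else 0)"

definition cd_join :: "nat \<Rightarrow> (nat \<Rightarrow> 'a::zero) \<Rightarrow> (nat \<Rightarrow> 'a) \<Rightarrow> (nat \<Rightarrow> 'a)" where
  "cd_join n a b = (\<lambda>i. if i < n then a i else if i < 2 * n then b (i - n) else 0)"

fun cd_conj :: "'a::field list \<Rightarrow> (nat \<Rightarrow> 'a) \<Rightarrow> (nat \<Rightarrow> 'a)" where
  "cd_conj [] x = (\<lambda>i. if i = 0 then x 0 else 0)"
| "cd_conj (g # ps) x =
     (let n = 2 ^ length ps in cd_join n (cd_conj ps (cd_lo n x)) (- cd_hi n x))"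

fun cd_mult :: "'a::field list \<Rightarrow> (nat \<Rightarrow> 'a) \<Rightarrow> (nat \<Rightarrow> 'a) \<Rightarrow> (nat \<Rightarrow> 'a)" where
  "cd_mult [] x y = (\<lambda>i. if i = 0 then x 0 * y 0 else 0)"
| "cd_mult (g # ps) x y =
     (let n = 2 ^ length ps; a = cd_lo n x; b = cd_hi n x; c = cd_lo n y; d = cd_hi n y in
      cd_join n (cd_mult ps a c + cd_scale g (cd_mult ps d (cd_conj ps b)))
                (cd_mult ps (cd_conj ps a) d + cd_mult ps c b))"

definition cd_carrier :: "'a::field list \<Rightarrow> (nat \<Rightarrow> 'a) set" where
  "cd_carrier ps = {x. \<forall>i. 2 ^ length ps \<le> i \<longrightarrow> x i = 0}"

definition cd_one :: "nat \<Rightarrow> 'a::field" where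
  "cd_one = (\<lambda>i. if i = 0 then 1 else 0)"

text \<open>Cayley algebra D_gamma(D_beta(D_alpha(F))).\<close>
definition cayley_params :: "'a::field \<Rightarrow> 'a \<Rightarrow> 'a \<Rightarrow> 'a list" where
  "cayley_params \<alpha> \<beta> \<gamma> = [\<gamma>, \<beta>, \<alpha>]"

definition cd_im :: "'a::field list \<Rightarrow> (nat \<Rightarrow> 'a) set \<Rightarrow> (nat \<Rightarrow> 'a) set" where
  "cd_im ps H = {a \<in> H. cd_conj ps a = - a}"

definition cd_subalgebra :: "'a::field list \<Rightarrow> (nat \<Rightarrow> 'a) set \<Rightarrow> bool" where
  "cd_subalgebra ps H \<longleftrightarrow> H \<subseteq> cd_carrier ps \<and> module.subspace cd_scale H
     \<and> cd_one \<in> H \<and> (\<forall>x\<in>H. \<forall>y\<in>H. cd_mult ps x y \<in> H)"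

definition cd_associative_on :: "'a::field list \<Rightarrow> (nat \<Rightarrow> 'a) set \<Rightarrow> bool" where
  "cd_associative_on ps H \<longleftrightarrow>
     (\<forall>x\<in>H. \<forall>y\<in>H. \<forall>z\<in>H. cd_mult ps (cd_mult ps x y) z = cd_mult ps x (cd_mult ps y z))"

definition cd_division :: "'a::field list \<Rightarrow> bool" where
  "cd_division ps \<longleftrightarrow> (\<forall>x\<in>cd_carrier ps. \<forall>y\<in>cd_carrier ps.
      cd_mult ps x y = 0 \<longrightarrow> x = 0 \<or> y = 0)"

definition quat_blocks :: "'a::field list \<Rightarrow> (nat \<Rightarrow> 'a) set set" where
  "quat_blocks ps = {cd_im ps H | H. cd_subalgebra ps H \<and> cd_associative_on ps H
       \<and> vector_space.dim cd_scale H = 4}"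

end

theory Submission
  imports Defs
begin


definition cm :: "'a::field \<Rightarrow> 'a \<Rightarrow> 'a \<Rightarrow> (nat \<Rightarrow> 'a) \<Rightarrow> (nat \<Rightarrow> 'a) \<Rightarrow> nat \<Rightarrow> 'a" where
  "cm \<alpha> \<beta> \<gamma> x y = (\<lambda>i. if i = 0 then (\<alpha> * \<beta> * \<gamma> * (x 7) * (y 7) - \<alpha> * \<beta> * (x 3) * (y 3) - \<alpha> * \<gamma> * (x 5) * (y 5) + \<alpha> * (x 1) * (y 1) - \<beta> * \<gamma> * (x 6) * (y 6) + \<beta> * (x 2) * (y 2) + \<gamma> * (x 4) * (y 4) + (x 0) * (y 0)) else if i = 1 then (\<beta> * \<gamma> * (x 6) * (y 7) - \<beta> * \<gamma> * (x 7) * (y 6) + \<beta> * (x 2) * (y 3) - \<beta> * (x 3) * (y 2) + \<gamma> * (x 4) * (y 5) - \<gamma> * (x 5) * (y 4) + (x 0) * (y 1) + (x 1) * (y 0)) else if i = 2 then (-\<alpha> * \<gamma> * (x 5) * (y 7) + \<alpha> * \<gamma> * (x 7) * (y 5) - \<alpha> * (x 1) * (y 3) + \<alpha> * (x 3) * (y 1) + \<gamma> * (x 4) * (y 6) - \<gamma> * (x 6) * (y 4) + (x 0) * (y 2) + (x 2) * (y 0)) else if i = 3 then (\<gamma> * (x 4) * (y 7) - \<gamma> * (x 5) * (y 6) + \<gamma> * (x 6) * (y 5) - \<gamma> * (x 7) * (y 4) + (x 0) * (y 3) - (x 1) * (y 2) + (x 2) * (y 1) + (x 3) * (y 0)) else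 if i = 4 then (\<alpha> * \<beta> * (x 3) * (y 7) - \<alpha> * \<beta> * (x 7) * (y 3) - \<alpha> * (x 1) * (y 5) + \<alpha> * (x 5) * (y 1) - \<beta> * (x 2) * (y 6) + \<beta> * (x 6) * (y 2) + (x 0) * (y 4) + (x 4) * (y 0)) else if i = 5 then (-\<beta> * (x 2) * (y 7) + \<beta> * (x 3) * (y 6) - \<beta> * (x 6) * (y 3) + \<beta> * (x 7) * (y 2) + (x 0) * (y 5) - (x 1) * (y 4) + (x 4) * (y 1) + (x 5) * (y 0)) else if i = 6 then (\<alpha> * (x 1) * (y 7) - \<alpha> * (x 3) * (y 5) + \<alpha> * (x 5) * (y 3) - \<alpha> * (x 7) * (y 1) + (x 0) * (y 6) - (x 2) * (y 4) + (x 4) * (y 2) + (x 6) * (y 0)) else if i = 7 then ((x 0) * (y 7) + (x 1) * (y 6) - (x 2) * (y 5) - (x 3) * (y 4) + (x 4) * (y 3) + (x 5) * (y 2) - (x 6) * (y 1) + (x 7) * (y 0)) else 0)"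


lemma sucs: "Suc 0 = 1" "Suc 1 = 2" "Suc 2 = 3" "Suc 3 = 4" "Suc 4 = 5" "Suc 5 = 6" "Suc 6 = 7" by simp_all

lemma fun_eq8:
  fixes f g :: "nat \<Rightarrow> 'b"
  assumes "f 0 = g 0" "f 1 = g 1" "f 2 = g 2" "f 3 = g 3" "f 4 = g 4" "f 5 = g 5" "f 6 = g 6" "f 7 = g 7"
    "\<And>i. i \<ge> 8 \<Longrightarrow> f i = g i"
  shows "f = g"
proof (rule ext)
  fix i :: nat
  show "f i = g i"
  proof (cases "i \<ge> 8")
    case False
    then have "i = 0 \<or> i = 1 \<or> i = 2 \<or> i = 3 \<or> i = 4 \<or> i = 5 \<or> i = 6 \<or> i = 7" by arith
    then show ?thesis using assms by auto
  qed (use assms in auto)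
qed

lemma cm_eq: "cd_mult [\<gamma>,\<beta>,\<alpha>] x y = cm \<alpha> \<beta> \<gamma> x y"
  apply (rule fun_eq8)
  apply (simp_all add: Let_def cd_join_def cd_lo_def cd_hi_def cd_scale_def)
  apply (simp_all only: sucs)
  apply (simp_all add: cm_def algebra_simps)
  done

lemma conj_eq: "cd_conj [\<gamma>,\<beta>,\<alpha>] x = (\<lambda>i. if i = 0 then x 0 else if i < 8 then - x i else 0)"
  apply (rule fun_eq8)
  apply (simp_all add: Let_def cd_join_def cd_lo_def cd_hi_def)
  apply (simp_all only: sucs)
  done

lemma carrier_eq: "cd_carrier [\<gamma>,\<beta>,\<alpha>] = {x. \<forall>i\<ge>8. x i = 0}"
  by (simp add: cd_carrier_def)

context
  fixes \<alpha> \<beta> \<gamma> :: "'a::field"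
begin

abbreviation "m \<equiv> cm \<alpha> \<beta> \<gamma>"

definition as3 where "as3 x y z = m (m x y) z - m x (m y z)"

lemma cm_hi: "i \<ge> 8 \<Longrightarrow> m x y i = 0" by (simp add: cm_def)

lemma cm_add1: "m (x + y) z = m x z + m y z"
  by (rule fun_eq8) (simp_all add: cm_def algebra_simps)
lemma cm_add2: "m z (x + y) = m z x + m z y"
  by (rule fun_eq8) (simp_all add: cm_def algebra_simps)
lemma cm_diff1: "m (x - y) z = m x z - m y z"
  by (rule fun_eq8) (simp_all add: cm_def algebra_simps)
lemma cm_diff2: "m z (x - y) = m z x - m z y"
  by (rule fun_eq8) (simp_all add: cm_def algebra_simps)
lemma cm_scale1: "m (cd_scale c x) z = cd_scale c (m x z)"
  by (rule fun_eq8) (simp_all add: cm_def cd_scale_def algebra_simps)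
lemma cm_scale2: "m z (cd_scale c x) = cd_scale c (m z x)"
  by (rule fun_eq8) (simp_all add: cm_def cd_scale_def algebra_simps)
lemma cm_zero1: "m 0 z = 0"
  by (rule fun_eq8) (simp_all add: cm_def)
lemma cm_zero2: "m z 0 = 0"
  by (rule fun_eq8) (simp_all add: cm_def)

lemma one_cm: "\<forall>i\<ge>8. x i = 0 \<Longrightarrow> m cd_one x = x"
  by (rule fun_eq8) (simp_all add: cm_def cd_one_def)
lemma cm_one: "\<forall>i\<ge>8. x i = 0 \<Longrightarrow> m x cd_one = x"
  by (rule fun_eq8) (simp_all add: cm_def cd_one_def)

lemma as_swap12: "as3 x y z = - as3 y x z"
  unfolding as3_def by (rule fun_eq8) (simp_all add: cm_def algebra_simps)
lemma as_swap23: "as3 x y z = - as3 x z y"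
  unfolding as3_def by (rule fun_eq8) (simp_all add: cm_def algebra_simps)
lemma as_xyxy: "as3 x y (m x y) = 0"
  unfolding as3_def by (rule fun_eq8) (simp_all add: cm_def algebra_simps)

end



context
  fixes \<alpha> \<beta> \<gamma> :: "'a::field"
begin

abbreviation "mm \<equiv> cm \<alpha> \<beta> \<gamma>"
abbreviation "ass \<equiv> as3 \<alpha> \<beta> \<gamma>"

lemma sq_im: "\<forall>i\<ge>8. u i = 0 \<Longrightarrow> u 0 = 0 \<Longrightarrow> mm u u = cd_scale (mm u u 0) cd_one"
  by (rule fun_eq8) (simp_all add: cm_def cd_scale_def cd_one_def algebra_simps)

lemma sq_gen: "\<forall>i\<ge>8. x i = 0 \<Longrightarrow> mm x x = cd_scale (2 * x 0) x + cd_scale (mm x x 0 - 2 * x 0 * x 0) cd_one"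
  by (rule fun_eq8) (simp_all add: cm_def cd_scale_def cd_one_def algebra_simps)

lemma B3: "\<forall>i\<ge>8. u i = 0 \<Longrightarrow> \<forall>i\<ge>8. v i = 0 \<Longrightarrow> u 0 = 0 \<Longrightarrow> v 0 = 0 \<Longrightarrow>
   mm v u = cd_scale (mm u v 0 + mm v u 0) cd_one - mm u v"
  by (rule fun_eq8) (simp_all add: cm_def cd_scale_def cd_one_def algebra_simps)

lemma B4: "\<forall>i\<ge>8. u i = 0 \<Longrightarrow> \<forall>i\<ge>8. v i = 0 \<Longrightarrow> u 0 = 0 \<Longrightarrow> v 0 = 0 \<Longrightarrow>
   mm u (mm u v) = cd_scale (mm u u 0) v"
  by (rule fun_eq8) (simp_all add: cm_def cd_scale_def algebra_simps)

lemma B5: "\<forall>i\<ge>8. u i = 0 \<Longrightarrow> \<forall>i\<ge>8. v i = 0 \<Longrightarrow> u 0 = 0 \<Longrightarrow> v 0 = 0 \<Longrightarrow>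
   mm (mm u v) v = cd_scale (mm v v 0) u"
  by (rule fun_eq8) (simp_all add: cm_def cd_scale_def algebra_simps)

lemma B6: "\<forall>i\<ge>8. u i = 0 \<Longrightarrow> \<forall>i\<ge>8. v i = 0 \<Longrightarrow> u 0 = 0 \<Longrightarrow> v 0 = 0 \<Longrightarrow>
   mm (mm u v) u = cd_scale (mm u v 0 + mm v u 0) u - cd_scale (mm u u 0) v"
  by (rule fun_eq8) (simp_all add: cm_def cd_scale_def algebra_simps)

lemma B7: "\<forall>i\<ge>8. u i = 0 \<Longrightarrow> \<forall>i\<ge>8. v i = 0 \<Longrightarrow> u 0 = 0 \<Longrightarrow> v 0 = 0 \<Longrightarrow>
   mm v (mm u v) = cd_scale (mm u v 0 + mm v u 0) v - cd_scale (mm v v 0) u"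
  by (rule fun_eq8) (simp_all add: cm_def cd_scale_def algebra_simps)

lemma diffsq: "mm (u - cd_scale c cd_one) (u + cd_scale c cd_one) = mm u u - cd_scale (c * c) cd_one"
  by (rule fun_eq8) (simp_all add: cm_def cd_scale_def cd_one_def algebra_simps)

lemma sc_diff: "cd_scale c (x - y) = cd_scale c x - cd_scale c (y :: nat \<Rightarrow> 'a)"
  by (simp add: cd_scale_def fun_eq_iff algebra_simps)

lemma as_add1: "ass (x + x') y z = ass x y z + ass x' y z"
  by (simp add: as3_def cm_add1 cm_add2 algebra_simps)
lemma as_add2: "ass y (x + x') z = ass y x z + ass y x' z"
  by (simp add: as3_def cm_add1 cm_add2 algebra_simps)
lemma as_add3: "ass y z (x + x') = ass y z x + ass y z x'"
  by (simp add: as3_def cm_add1 cm_add2 algebra_simps)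
lemma as_scale1: "ass (cd_scale c x) y z = cd_scale c (ass x y z)"
  by (simp add: as3_def cm_scale1 cm_scale2 sc_diff)
lemma as_scale2: "ass y (cd_scale c x) z = cd_scale c (ass y x z)"
  by (simp add: as3_def cm_scale1 cm_scale2 sc_diff)
lemma as_scale3: "ass y z (cd_scale c x) = cd_scale c (ass y z x)"
  by (simp add: as3_def cm_scale1 cm_scale2 sc_diff)

end



lemma vs_cd: "vector_space (cd_scale :: 'a::field \<Rightarrow> (nat \<Rightarrow> 'a) \<Rightarrow> (nat \<Rightarrow> 'a))"
  by unfold_locales (simp_all add: cd_scale_def fun_eq_iff algebra_simps)

interpretation VS: vector_space "cd_scale :: 'a::field \<Rightarrow> (nat \<Rightarrow> 'a) \<Rightarrow> (nat \<Rightarrow> 'a)"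
  by (rule vs_cd)

lemma subspace_C: "VS.subspace {x::nat\<Rightarrow>'a::field. \<forall>i\<ge>8. x i = 0}"
  by (auto simp: VS.subspace_def cd_scale_def)

lemma subspace_coord: "VS.subspace {x::nat\<Rightarrow>'a::field. x k = 0}"
  by (auto simp: VS.subspace_def cd_scale_def)

lemma dim_V: "VS.dim {x::nat\<Rightarrow>'a::field. (\<forall>i\<ge>8. x i = 0) \<and> x 0 = 0} = 7"
proof -
  define e where "e = (\<lambda>k::nat. (\<lambda>j::nat. if j = k then (1::'a) else 0))"
  let ?B = "e ` {1..7}"
  let ?V = "{x::nat\<Rightarrow>'a::field. (\<forall>i\<ge>8. x i = 0) \<and> x 0 = 0}"
  have sub: "?B \<subseteq> ?V" by (auto simp: e_def)
  have span: "?V \<subseteq> VS.span ?B"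
  proof
    fix x assume x: "x \<in> ?V"
    have "x = cd_scale (x 1) (e 1) + cd_scale (x 2) (e 2) + cd_scale (x 3) (e 3) + cd_scale (x 4) (e 4)
        + cd_scale (x 5) (e 5) + cd_scale (x 6) (e 6) + cd_scale (x 7) (e 7)"
      by (rule fun_eq8) (use x in \<open>auto simp: e_def cd_scale_def\<close>)
    moreover have "cd_scale (x 1) (e 1) + cd_scale (x 2) (e 2) + cd_scale (x 3) (e 3) + cd_scale (x 4) (e 4)
        + cd_scale (x 5) (e 5) + cd_scale (x 6) (e 6) + cd_scale (x 7) (e 7) \<in> VS.span ?B"
      by (intro VS.span_add VS.span_scale VS.span_base) auto
    ultimately show "x \<in> VS.span ?B" by simp
  qed
  have ind: "VS.independent ?B"
    unfolding VS.dependent_def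
  proof
    assume "\<exists>a\<in>?B. a \<in> VS.span (?B - {a})"
    then obtain k where k: "k \<in> {1..7}" "e k \<in> VS.span (?B - {e k})" by blast
    have "VS.span (?B - {e k}) \<subseteq> {x. x k = 0}"
      by (rule VS.span_minimal) (auto simp: e_def subspace_coord)
    with k show False by (auto simp: e_def)
  qed
  have "inj_on e {1..7}"
  proof (rule inj_onI)
    fix a b assume "e a = e b"
    then have "e a a = e b a" by simp
    then show "a = b" by (auto simp: e_def split: if_splits)
  qed
  then have card: "card ?B = 7" by (simp add: card_image)
  show ?thesis using VS.dim_unique[OF sub span ind card] .
qed

lemma dim_im3:
  fixes H :: "(nat \<Rightarrow> 'a::field) set"
  assumes H: "VS.subspace H" "H \<subseteq> {x. \<forall>i\<ge>8. x i = 0}" "cd_one \<in> H" "VS.dim H = 4"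
  shows "VS.dim {x\<in>H. x 0 = 0} = 3"
proof -
  let ?I = "{x\<in>H. x 0 = 0}"
  obtain B0 where B0: "B0 \<subseteq> ?I" "VS.independent B0" "?I \<subseteq> VS.span B0" "card B0 = VS.dim ?I"
    by (rule VS.basis_exists)
  obtain BH where BH: "BH \<subseteq> H" "VS.independent BH" "H \<subseteq> VS.span BH" "card BH = VS.dim H"
    by (rule VS.basis_exists)
  have "finite BH" using BH(4) H(4) by (metis card.infinite zero_neq_numeral)
  then have finB0: "finite B0" using VS.independent_span_bound[OF _ B0(2)] B0(1) BH(3) by blast
  have spB0: "VS.span B0 \<subseteq> {x. x 0 = 0}"
    by (rule VS.span_minimal) (use B0(1) subspace_coord in auto)
  have o_notin: "cd_one \<notin> VS.span B0" using spB0 by (auto simp: cd_one_def)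
  have ind: "VS.independent (insert cd_one B0)" by (rule VS.independent_insertI[OF o_notin B0(2)])
  have sub: "insert cd_one B0 \<subseteq> H" using B0(1) H(3) by auto
  have sp: "H \<subseteq> VS.span (insert cd_one B0)"
  proof
    fix x assume x: "x \<in> H"
    have "x - cd_scale (x 0) cd_one \<in> H"
      using x H(1,3) by (intro VS.subspace_diff VS.subspace_scale) auto
    then have "x - cd_scale (x 0) cd_one \<in> ?I" by (auto simp: cd_scale_def cd_one_def)
    then have "x - cd_scale (x 0) cd_one \<in> VS.span B0" using B0(3) by auto
    then show "x \<in> VS.span (insert cd_one B0)" unfolding VS.span_breakdown_eq by blast
  qed
  have "cd_one \<notin> B0" using o_notin VS.span_base by blast
  then have "card (insert cd_one B0) = card B0 + 1" using finB0 by simp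
  then have "VS.dim H = card B0 + 1" using VS.dim_unique[OF sub sp ind] by simp
  then show ?thesis using B0(4) H(4) by simp
qed

lemma span_mult_closed:
  assumes "\<forall>a\<in>S. \<forall>b\<in>S. cm \<alpha> \<beta> \<gamma> a b \<in> VS.span S"
  shows "\<forall>x\<in>VS.span S. \<forall>y\<in>VS.span S. cm \<alpha> \<beta> \<gamma> x y \<in> VS.span S"
proof -
  have 1: "cm \<alpha> \<beta> \<gamma> a y \<in> VS.span S" if a: "a \<in> S" and y: "y \<in> VS.span S" for a y
  proof -
    have "VS.span S \<subseteq> {y. cm \<alpha> \<beta> \<gamma> a y \<in> VS.span S}"
      apply (rule VS.span_minimal)
      using assms a apply blast
      by (auto simp: VS.subspace_def cm_zero2 cm_add2 cm_scale2 intro: VS.span_add VS.span_scale VS.span_zero)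
    with y show ?thesis by auto
  qed
  have "VS.span S \<subseteq> {x. \<forall>y\<in>VS.span S. cm \<alpha> \<beta> \<gamma> x y \<in> VS.span S}"
    apply (rule VS.span_minimal)
    using 1 apply blast
    by (auto simp: VS.subspace_def cm_zero1 cm_add1 cm_scale1 intro: VS.span_add VS.span_scale VS.span_zero)
  then show ?thesis by auto
qed

lemma lin_vanish:
  fixes g :: "(nat \<Rightarrow> 'a::field) \<Rightarrow> (nat \<Rightarrow> 'a)"
  assumes "\<And>x y. g (x + y) = g x + g y" "\<And>c x. g (cd_scale c x) = cd_scale c (g x)" "\<And>x. x \<in> S \<Longrightarrow> g x = 0"
    and "x \<in> VS.span S"
  shows "g x = 0"
proof -
  have g0: "g 0 = 0" using assms(1)[of 0 0] by simp
  have "VS.span S \<subseteq> {x. g x = 0}"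
    by (rule VS.span_minimal) (use assms g0 in \<open>auto simp: VS.subspace_def cd_scale_def\<close>)
  with assms(4) show ?thesis by auto
qed

lemma assoc_span:
  assumes "\<forall>a\<in>S. \<forall>b\<in>S. \<forall>c\<in>S. as3 \<alpha> \<beta> \<gamma> a b c = 0"
    and "x \<in> VS.span S" "y \<in> VS.span S" "z \<in> VS.span S"
  shows "as3 \<alpha> \<beta> \<gamma> x y z = 0"
proof -
  have 1: "as3 \<alpha> \<beta> \<gamma> a b z = 0" if "a \<in> S" "b \<in> S" "z \<in> VS.span S" for a b z
    by (rule lin_vanish[where g = "as3 \<alpha> \<beta> \<gamma> a b"]) (use assms(1) that in \<open>auto simp: as_add3 as_scale3\<close>)
  have 2: "as3 \<alpha> \<beta> \<gamma> a y z = 0" if "a \<in> S" "y \<in> VS.span S" "z \<in> VS.span S" for a y z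
    by (rule lin_vanish[where g = "\<lambda>y. as3 \<alpha> \<beta> \<gamma> a y z"]) (use 1 that in \<open>auto simp: as_add2 as_scale2\<close>)
  show ?thesis
    by (rule lin_vanish[where g = "\<lambda>x. as3 \<alpha> \<beta> \<gamma> x y z"]) (use 2 assms in \<open>auto simp: as_add1 as_scale1\<close>)
qed

lemma dim_fill:
  fixes H S :: "(nat \<Rightarrow> 'a::field) set"
  assumes "VS.subspace H" "VS.dim H = card S" "VS.independent S" "finite S" "S \<noteq> {}" "S \<subseteq> H"
  shows "H = VS.span S"
proof -
  have "VS.span S \<subseteq> H" by (rule VS.span_minimal) (use assms in auto)
  moreover have "H \<subseteq> VS.span S"
  proof (rule ccontr)
    assume "\<not> H \<subseteq> VS.span S"
    then obtain x where x: "x \<in> H" "x \<notin> VS.span S" by auto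
    have ind: "VS.independent (insert x S)" by (rule VS.independent_insertI) (use x assms in auto)
    obtain BH where BH: "BH \<subseteq> H" "VS.independent BH" "H \<subseteq> VS.span BH" "card BH = VS.dim H"
      by (rule VS.basis_exists)
    have "card S > 0" using assms(4,5) by (simp add: card_gt_0_iff)
    then have fin: "finite BH" using BH(4) assms(2) by (metis card.infinite less_irrefl)
    have "insert x S \<subseteq> VS.span BH" using x assms BH by auto
    from VS.independent_span_bound[OF fin ind this] have "card (insert x S) \<le> card BH" by auto
    moreover have "x \<notin> S" using x VS.span_base by auto
    ultimately show False using assms BH(4) by simp
  qed
  ultimately show ?thesis by auto
qed




lemma fun_neg_self: "(2::'a::field) \<noteq> 0 \<Longrightarrow> (f::nat \<Rightarrow> 'a) = - f \<Longrightarrow> f = 0"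
proof (rule ext)
  fix i assume "(2::'a) \<noteq> 0" "f = - f"
  then have "f i = - f i" by (metis uminus_apply)
  then have "2 * f i = 0" by (simp add: algebra_simps)
  with \<open>2 \<noteq> 0\<close> show "f i = 0 i" by simp
qed

lemma divlin: "((X::'a::field) * y + Z * t) / d = (X / d) * y + (Z / d) * t"
  by (simp add: add_divide_distrib)

lemma eq_mem: "a = b \<Longrightarrow> b \<in> T \<Longrightarrow> a \<in> T" by simp

context
  fixes \<alpha> \<beta> \<gamma> :: "'a::field"
begin

abbreviation "mq \<equiv> cm \<alpha> \<beta> \<gamma>"
abbreviation "aq \<equiv> as3 \<alpha> \<beta> \<gamma>"

lemma as_aa1: "(2::'a) \<noteq> 0 \<Longrightarrow> aq x x z = 0"
  by (erule fun_neg_self[OF _ as_swap12[where \<alpha>=\<alpha> and \<beta>=\<beta> and \<gamma>=\<gamma> and x=x and y=x and z=z]])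
lemma as_aa3: "(2::'a) \<noteq> 0 \<Longrightarrow> aq z x x = 0"
  by (erule fun_neg_self[OF _ as_swap23[where \<alpha>=\<alpha> and \<beta>=\<beta> and \<gamma>=\<gamma> and x=z and y=x and z=x]])
lemma as_aa2: "(2::'a) \<noteq> 0 \<Longrightarrow> aq x z x = 0"
  using as_swap23[where \<alpha>=\<alpha> and \<beta>=\<beta> and \<gamma>=\<gamma> and x=x and y=z and z=x] as_aa1[where x=x and z=z] by simp

lemma as_one1: "\<forall>i\<ge>8. y i = 0 \<Longrightarrow> \<forall>i\<ge>8. z i = 0 \<Longrightarrow> aq cd_one y z = 0"
  by (simp add: as3_def one_cm cm_hi)
lemma as_one2: "\<forall>i\<ge>8. y i = 0 \<Longrightarrow> \<forall>i\<ge>8. z i = 0 \<Longrightarrow> aq y cd_one z = 0"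
  by (simp add: as3_def one_cm cm_one cm_hi)
lemma as_one3: "\<forall>i\<ge>8. y i = 0 \<Longrightarrow> \<forall>i\<ge>8. z i = 0 \<Longrightarrow> aq y z cd_one = 0"
  by (simp add: as3_def cm_one cm_hi)

lemma core:
  fixes u v :: "nat \<Rightarrow> 'a"
  assumes char: "(2::'a) \<noteq> 0"
   and div: "\<And>x y. \<forall>i\<ge>8. x i = 0 \<Longrightarrow> \<forall>i\<ge>8. y i = 0 \<Longrightarrow> mq x y = 0 \<Longrightarrow> x = 0 \<or> y = 0"
   and uC: "\<forall>i\<ge>8. u i = 0" and vC: "\<forall>i\<ge>8. v i = 0" and u0: "u 0 = 0" and v0: "v 0 = 0"
   and ind: "VS.independent {u, v}" and uv: "u \<noteq> v"
  shows "VS.independent {cd_one, u, v, mq u v} \<and> card {cd_one, u, v, mq u v} = 4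
     \<and> (\<forall>a\<in>{cd_one, u, v, mq u v}. \<forall>b\<in>{cd_one, u, v, mq u v}. mq a b \<in> VS.span {cd_one, u, v, mq u v})
     \<and> (\<forall>a\<in>{cd_one, u, v, mq u v}. \<forall>b\<in>{cd_one, u, v, mq u v}. \<forall>c\<in>{cd_one, u, v, mq u v}. aq a b c = 0)"
proof -
  define w where "w = mq u v"
  define S where "S = {cd_one, u, v, w}"
  have wC: "\<forall>i\<ge>8. w i = 0" by (simp add: w_def cm_hi)
  have oC: "\<forall>i\<ge>8. cd_one i = (0::'a)" by (simp add: cd_one_def)
  have o0: "cd_one 0 = (1::'a)" by (simp add: cd_one_def)
  have Ball_S: "(\<forall>a\<in>S. P a) \<longleftrightarrow> P cd_one \<and> P u \<and> P v \<and> P w" for P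
    by (auto simp: S_def)
  have inS: "cd_one \<in> VS.span S" "u \<in> VS.span S" "v \<in> VS.span S" "w \<in> VS.span S"
    by (auto simp: S_def intro: VS.span_base)
  have prods: "\<forall>a\<in>S. \<forall>b\<in>S. mq a b \<in> VS.span S"
  proof -
    have p1: "mq cd_one x = x" "mq x cd_one = x" if "\<forall>i\<ge>8. x i = 0" for x
      using one_cm[OF that] cm_one[OF that] by auto
    have e_uu: "mq u u = cd_scale (mq u u 0) cd_one" by (rule sq_im[OF uC u0])
    have uu: "mq u u \<in> VS.span S" by (rule eq_mem[OF e_uu]) (intro VS.span_scale VS.span_diff VS.span_add inS)
    have e_vv: "mq v v = cd_scale (mq v v 0) cd_one" by (rule sq_im[OF vC v0])
    have vv: "mq v v \<in> VS.span S" by (rule eq_mem[OF e_vv]) (intro VS.span_scale VS.span_diff VS.span_add inS)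
    have e_vu: "mq v u = cd_scale (mq u v 0 + mq v u 0) cd_one - w" unfolding w_def by (rule B3[OF uC vC u0 v0])
    have vu: "mq v u \<in> VS.span S" by (rule eq_mem[OF e_vu]) (intro VS.span_scale VS.span_diff VS.span_add inS)
    have e_uw: "mq u w = cd_scale (mq u u 0) v" unfolding w_def by (rule B4[OF uC vC u0 v0])
    have uw: "mq u w \<in> VS.span S" by (rule eq_mem[OF e_uw]) (intro VS.span_scale VS.span_diff VS.span_add inS)
    have e_wv: "mq w v = cd_scale (mq v v 0) u" unfolding w_def by (rule B5[OF uC vC u0 v0])
    have wv: "mq w v \<in> VS.span S" by (rule eq_mem[OF e_wv]) (intro VS.span_scale VS.span_diff VS.span_add inS)
    have e_wu: "mq w u = cd_scale (mq u v 0 + mq v u 0) u - cd_scale (mq u u 0) v" unfolding w_def by (rule B6[OF uC vC u0 v0])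
    have wu: "mq w u \<in> VS.span S" by (rule eq_mem[OF e_wu]) (intro VS.span_scale VS.span_diff VS.span_add inS)
    have e_vw: "mq v w = cd_scale (mq u v 0 + mq v u 0) v - cd_scale (mq v v 0) u" unfolding w_def by (rule B7[OF uC vC u0 v0])
    have vw: "mq v w \<in> VS.span S" by (rule eq_mem[OF e_vw]) (intro VS.span_scale VS.span_diff VS.span_add inS)
    have e_ww: "mq w w = cd_scale (2 * w 0) w + cd_scale (mq w w 0 - 2 * w 0 * w 0) cd_one" by (rule sq_gen[OF wC])
    have ww: "mq w w \<in> VS.span S" by (rule eq_mem[OF e_ww]) (intro VS.span_scale VS.span_diff VS.span_add inS)
    have uv': "mq u v \<in> VS.span S" using inS by (simp add: w_def)
    show ?thesis unfolding Ball_S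
      using uu vv vu uw wv wu vw ww uv' inS p1[OF oC] p1[OF uC] p1[OF vC] p1[OF wC]
      by simp
  qed
  have assoc: "\<forall>a\<in>S. \<forall>b\<in>S. \<forall>c\<in>S. aq a b c = 0"
  proof -
    have a0: "aq u v w = 0" unfolding w_def by (rule as_xyxy)
    have a1: "aq v u w = 0" using as_swap12[where \<alpha>=\<alpha> and \<beta>=\<beta> and \<gamma>=\<gamma> and x=u and y=v and z=w] a0 by simp
    have a2: "aq u w v = 0" using as_swap23[where \<alpha>=\<alpha> and \<beta>=\<beta> and \<gamma>=\<gamma> and x=u and y=v and z=w] a0 by simp
    have a3: "aq w u v = 0" using as_swap12[where \<alpha>=\<alpha> and \<beta>=\<beta> and \<gamma>=\<gamma> and x=w and y=u and z=v] a2 by simp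
    have a4: "aq v w u = 0" using as_swap23[where \<alpha>=\<alpha> and \<beta>=\<beta> and \<gamma>=\<gamma> and x=v and y=u and z=w] a1 by simp
    have a5: "aq w v u = 0" using as_swap12[where \<alpha>=\<alpha> and \<beta>=\<beta> and \<gamma>=\<gamma> and x=w and y=v and z=u] a4 by simp
    note C = oC uC vC wC
    show ?thesis unfolding S_def
      using a0 a1 a2 a3 a4 a5 as_aa1[OF char] as_aa2[OF char] as_aa3[OF char]
        as_one1[OF C(1) C(1)] as_one1[OF C(1) C(2)] as_one1[OF C(1) C(3)] as_one1[OF C(1) C(4)]
        as_one1[OF C(2) C(1)] as_one1[OF C(2) C(2)] as_one1[OF C(2) C(3)] as_one1[OF C(2) C(4)]
        as_one1[OF C(3) C(1)] as_one1[OF C(3) C(2)] as_one1[OF C(3) C(3)] as_one1[OF C(3) C(4)]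
        as_one1[OF C(4) C(1)] as_one1[OF C(4) C(2)] as_one1[OF C(4) C(3)] as_one1[OF C(4) C(4)]
        as_one2[OF C(1) C(1)] as_one2[OF C(1) C(2)] as_one2[OF C(1) C(3)] as_one2[OF C(1) C(4)]
        as_one2[OF C(2) C(1)] as_one2[OF C(2) C(2)] as_one2[OF C(2) C(3)] as_one2[OF C(2) C(4)]
        as_one2[OF C(3) C(1)] as_one2[OF C(3) C(2)] as_one2[OF C(3) C(3)] as_one2[OF C(3) C(4)]
        as_one2[OF C(4) C(1)] as_one2[OF C(4) C(2)] as_one2[OF C(4) C(3)] as_one2[OF C(4) C(4)]
        as_one3[OF C(1) C(1)] as_one3[OF C(1) C(2)] as_one3[OF C(1) C(3)] as_one3[OF C(1) C(4)]
        as_one3[OF C(2) C(1)] as_one3[OF C(2) C(2)] as_one3[OF C(2) C(3)] as_one3[OF C(2) C(4)]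
        as_one3[OF C(3) C(1)] as_one3[OF C(3) C(2)] as_one3[OF C(3) C(3)] as_one3[OF C(3) C(4)]
        as_one3[OF C(4) C(1)] as_one3[OF C(4) C(2)] as_one3[OF C(4) C(3)] as_one3[OF C(4) C(4)]
      by simp
  qed
  have u_ne0: "u \<noteq> 0" using ind VS.dependent_zero by blast
  have spuv: "VS.span {u, v} \<subseteq> {x. x 0 = 0}"
    by (rule VS.span_minimal) (use u0 v0 subspace_coord in auto)
  have o_notin: "cd_one \<notin> VS.span {u, v}" using spuv o0 by auto
  have ind3: "VS.independent {cd_one, u, v}"
    using VS.independent_insertI[OF o_notin ind] by simp
  have ou: "cd_one \<noteq> u" "cd_one \<noteq> v" using o0 u0 v0 by auto
  have v_notin: "v \<notin> VS.span {cd_one, u}"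
  proof
    assume "v \<in> VS.span {cd_one, u}"
    moreover have "{cd_one, u, v} - {v} = {cd_one, u}" using ou uv by auto
    ultimately have "v \<in> VS.span ({cd_one, u, v} - {v})" by simp
    then have "VS.dependent {cd_one, u, v}" unfolding VS.dependent_def by blast
    with ind3 show False by simp
  qed
  have w_notin: "w \<notin> VS.span {cd_one, u, v}"
  proof
    assume "w \<in> VS.span {cd_one, u, v}"
    then obtain a where "w - cd_scale a cd_one \<in> VS.span {u, v}" unfolding VS.span_breakdown_eq by blast
    then obtain b where "w - cd_scale a cd_one - cd_scale b u \<in> VS.span {v}" unfolding VS.span_breakdown_eq by blast
    then obtain c where "w - cd_scale a cd_one - cd_scale b u - cd_scale c v \<in> VS.span {}"
      unfolding VS.span_breakdown_eq by blast
    then have wexp: "w = cd_scale a cd_one + cd_scale b u + cd_scale c v"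
      by (simp add: algebra_simps)
    define q where "q = mq u u 0"
    have E1: "mq u w = cd_scale q v" unfolding w_def q_def by (rule B4[OF uC vC u0 v0])
    have "mq u w = cd_scale a (mq u cd_one) + cd_scale b (mq u u) + cd_scale c (mq u v)"
      by (simp add: wexp cm_add2 cm_scale2)
    also have "\<dots> = cd_scale a u + cd_scale b (cd_scale q cd_one) + cd_scale c w"
      using cm_one[where \<alpha>=\<alpha> and \<beta>=\<beta> and \<gamma>=\<gamma>, OF uC] sq_im[where \<alpha>=\<alpha> and \<beta>=\<beta> and \<gamma>=\<gamma>, OF uC u0] by (simp add: q_def w_def)
    finally have E2: "cd_scale q v = cd_scale a u + cd_scale b (cd_scale q cd_one) + cd_scale c w"
      using E1 by simp
    have E3: "cd_scale (q - c*c) v = cd_scale (b*q + c*a) cd_one + cd_scale (a + c*b) u"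
    proof (rule ext)
      fix i
      have h: "q * v i = a * u i + b * (q * cd_one i) + c * (a * cd_one i + b * u i + c * v i)"
        using fun_cong[OF E2, of i] wexp by (simp add: cd_scale_def)
      have "(q - c*c) * v i - ((b*q + c*a) * cd_one i + (a + c*b) * u i)
          = q * v i - (a * u i + b * (q * cd_one i) + c * (a * cd_one i + b * u i + c * v i))"
        by (simp add: algebra_simps)
      with h show "cd_scale (q - c*c) v i = (cd_scale (b*q + c*a) cd_one + cd_scale (a + c*b) u) i"
        by (simp add: cd_scale_def)
    qed
    show False
    proof (cases "q - c*c = 0")
      case False
      define d where "d = q - c*c"
      have dnz: "d \<noteq> 0" using False by (simp add: d_def)
      have "v = cd_scale ((b*q + c*a) / d) cd_one + cd_scale ((a + c*b) / d) u"
      proof (rule ext)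
        fix i
        have h: "d * v i = (b*q + c*a) * cd_one i + (a + c*b) * u i"
          using fun_cong[OF E3, of i] by (simp add: cd_scale_def d_def)
        have "v i = (d * v i) / d" using dnz by simp
        also have "\<dots> = ((b*q + c*a) * cd_one i + (a + c*b) * u i) / d" by (simp only: h)
        also have "\<dots> = ((b*q + c*a) / d) * cd_one i + ((a + c*b) / d) * u i"
          by (rule divlin)
        finally show "v i = (cd_scale ((b*q + c*a) / d) cd_one + cd_scale ((a + c*b) / d) u) i"
          by (simp add: cd_scale_def)
      qed
      moreover have "cd_scale ((b*q + c*a) / d) cd_one + cd_scale ((a + c*b) / d) u
          \<in> VS.span {cd_one, u}"
        by (intro VS.span_add VS.span_scale VS.span_base) auto
      ultimately show False using v_notin by simp
    next
      case True
      then have qc: "q = c * c" by simp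
      have sqq: "mq u u = cd_scale q cd_one" unfolding q_def by (rule sq_im[OF uC u0])
      have "mq (u - cd_scale c cd_one) (u + cd_scale c cd_one) = mq u u - cd_scale (c * c) cd_one"
        by (rule diffsq)
      then have "mq (u - cd_scale c cd_one) (u + cd_scale c cd_one) = 0"
        using sqq qc by simp
      moreover have "\<forall>i\<ge>8. (u - cd_scale c cd_one) i = 0" "\<forall>i\<ge>8. (u + cd_scale c cd_one) i = 0"
        using uC by (auto simp: cd_scale_def cd_one_def)
      ultimately have "u - cd_scale c cd_one = 0 \<or> u + cd_scale c cd_one = 0" using div by blast
      then have "u = cd_scale c cd_one \<or> u = - cd_scale c cd_one"
      proof (elim disjE)
        assume "u - cd_scale c cd_one = 0" then show ?thesis by simp
      next
        assume "u + cd_scale c cd_one = 0" then show ?thesis by (simp add: eq_neg_iff_add_eq_0)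
      qed
      moreover have "- cd_scale c cd_one = cd_scale (- c) (cd_one :: nat \<Rightarrow> 'a)"
        by (simp add: cd_scale_def fun_eq_iff)
      ultimately have "\<exists>k. u = cd_scale k cd_one" by blast
      then obtain k where uk: "u = cd_scale k cd_one" by blast
      have "k = 0" using fun_cong[OF uk, of 0] u0 by (simp add: cd_scale_def cd_one_def)
      then have "u = 0" using uk by (simp add: cd_scale_def fun_eq_iff)
      with u_ne0 show False by simp
    qed
  qed
  have indS: "VS.independent S"
  proof -
    have "S = insert w {cd_one, u, v}" by (auto simp: S_def)
    then show ?thesis using VS.independent_insertI[OF w_notin ind3] by simp
  qed
  have wn: "w \<notin> {cd_one, u, v}"
  proof
    assume "w \<in> {cd_one, u, v}"
    then have "w \<in> VS.span {cd_one, u, v}" by (rule VS.span_base)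
    with w_notin show False by simp
  qed
  have dist: "cd_one \<noteq> w" "u \<noteq> w" "v \<noteq> w" using wn by auto
  have cardS: "card S = 4" using ou uv dist by (simp add: S_def)
  have Seq: "S = {cd_one, u, v, mq u v}" by (simp add: S_def w_def)
  from indS cardS prods assoc show ?thesis unfolding Seq by (intro conjI) assumption+
qed

end



lemma self_neg:
  fixes a :: "'a::field"
  assumes "a = - a" "(2::'a) \<noteq> 0"
  shows "a = 0"
proof -
  have "2 * a = a + a" by (rule mult_2)
  also have "\<dots> = a + - a" using assms(1) by (rule arg_cong[where f="(+) a"])
  also have "\<dots> = 0" by (rule right_minus)
  finally have "2 * a = 0" .
  then show ?thesis using assms(2) by (simp only: mult_eq_0_iff) blast
qed

theorem mainTheorem1:
  fixes \<alpha> \<beta> \<gamma> :: "'a::field"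
  assumes char: "(2::'a) \<noteq> 0"
    and nz: "\<alpha> \<noteq> 0" "\<beta> \<noteq> 0" "\<gamma> \<noteq> 0"
    and div: "cd_division (cayley_params \<alpha> \<beta> \<gamma>)"
  shows "vector_space.dim cd_scale (cd_im (cayley_params \<alpha> \<beta> \<gamma>) (cd_carrier (cayley_params \<alpha> \<beta> \<gamma>))) = 7
    \<and> (\<forall>B \<in> quat_blocks (cayley_params \<alpha> \<beta> \<gamma>). vector_space.dim cd_scale B = 3)
    \<and> (\<forall>U. module.subspace cd_scale U
          \<and> U \<subseteq> cd_im (cayley_params \<alpha> \<beta> \<gamma>) (cd_carrier (cayley_params \<alpha> \<beta> \<gamma>))
          \<and> vector_space.dim cd_scale U = 2
          \<longrightarrow> (\<exists>!B. B \<in> quat_blocks (cayley_params \<alpha> \<beta> \<gamma>) \<and> U \<subseteq> B))"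
proof -
  let ?p = "cayley_params \<alpha> \<beta> \<gamma>"
  have p: "?p = [\<gamma>, \<beta>, \<alpha>]" by (simp add: cayley_params_def)
  define C where "C = {x::nat\<Rightarrow>'a. \<forall>i\<ge>8. x i = 0}"
  have carr: "cd_carrier ?p = C" by (simp add: p carrier_eq C_def)
  have mult: "cd_mult ?p x y = cm \<alpha> \<beta> \<gamma> x y" for x y unfolding p by (rule cm_eq)
  have conj_iff: "cd_conj ?p x = - x \<longleftrightarrow> x 0 = 0" if "x \<in> C" for x
  proof
    assume "cd_conj ?p x = - x"
    then have "(\<lambda>i. if i = 0 then x 0 else if i < 8 then - x i else 0) = - x" unfolding p conj_eq .
    then have "(\<lambda>i. if i = 0 then x 0 else if i < 8 then - x i else 0) 0 = (- x) 0" by (rule fun_cong)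
    then have "x 0 = - x 0" by simp
    then show "x 0 = 0" using char by (rule self_neg)
  next
    assume h: "x 0 = 0"
    show "cd_conj ?p x = - x"
      unfolding p conj_eq
    proof (rule ext)
      fix i
      show "(if i = 0 then x 0 else if i < 8 then - x i else 0) = (- x) i"
        using h that by (auto simp: C_def)
    qed
  qed
  have im: "cd_im ?p H = {x\<in>H. x 0 = 0}" if "H \<subseteq> C" for H
    using that conj_iff by (auto simp: cd_im_def)
  have div': "x = 0 \<or> y = 0" if "\<forall>i\<ge>8. x i = 0" "\<forall>i\<ge>8. y i = 0" "cm \<alpha> \<beta> \<gamma> x y = 0" for x y
    using div that unfolding cd_division_def carr mult by (auto simp: C_def)
  have V: "cd_im ?p (cd_carrier ?p) = {x. (\<forall>i\<ge>8. x i = 0) \<and> x 0 = 0}"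
    using im[of C] by (auto simp: carr C_def)
  have part1: "VS.dim (cd_im ?p (cd_carrier ?p)) = 7" unfolding V by (rule dim_V)
  have part2: "\<forall>B \<in> quat_blocks ?p. VS.dim B = 3"
  proof
    fix B assume "B \<in> quat_blocks ?p"
    then obtain H where H: "B = cd_im ?p H" "cd_subalgebra ?p H" "VS.dim H = 4"
      unfolding quat_blocks_def by blast
    from H(2) have HC: "H \<subseteq> C" "VS.subspace H" "cd_one \<in> H" unfolding cd_subalgebra_def carr by auto
    have "VS.dim {x\<in>H. x 0 = 0} = 3" by (rule dim_im3) (use HC H(3) in \<open>auto simp: C_def\<close>)
    then show "VS.dim B = 3" using H(1) im[OF HC(1)] by simp
  qed
  have part3: "\<exists>!B. B \<in> quat_blocks ?p \<and> U \<subseteq> B"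
    if U: "VS.subspace U" "U \<subseteq> cd_im ?p (cd_carrier ?p)" "VS.dim U = 2" for U
  proof -
    have UV: "U \<subseteq> {x. (\<forall>i\<ge>8. x i = 0) \<and> x 0 = 0}" using U(2) V by simp
    obtain BU where BU: "BU \<subseteq> U" "VS.independent BU" "U \<subseteq> VS.span BU" "card BU = VS.dim U"
      by (rule VS.basis_exists)
    then obtain u v where uv: "BU = {u, v}" "u \<noteq> v" using U(3) by (auto simp: card_2_iff)
    have uU: "u \<in> U" and vU: "v \<in> U" using BU(1) uv by auto
    have uC: "\<forall>i\<ge>8. u i = 0" and u0: "u 0 = 0" using uU UV by auto
    have vC: "\<forall>i\<ge>8. v i = 0" and v0: "v 0 = 0" using vU UV by auto
    define S where "S = {cd_one, u, v, cm \<alpha> \<beta> \<gamma> u v}"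
    have core': "VS.independent S \<and> card S = 4
     \<and> (\<forall>a\<in>S. \<forall>b\<in>S. cm \<alpha> \<beta> \<gamma> a b \<in> VS.span S)
     \<and> (\<forall>a\<in>S. \<forall>b\<in>S. \<forall>c\<in>S. as3 \<alpha> \<beta> \<gamma> a b c = 0)"
      unfolding S_def by (rule core[OF char div' uC vC u0 v0]) (use BU(2) uv in auto)
    then have indS: "VS.independent S" and cardS: "card S = 4"
      and prodS: "\<forall>a\<in>S. \<forall>b\<in>S. cm \<alpha> \<beta> \<gamma> a b \<in> VS.span S"
      and assS: "\<forall>a\<in>S. \<forall>b\<in>S. \<forall>c\<in>S. as3 \<alpha> \<beta> \<gamma> a b c = 0" by auto
    have finS: "finite S" "S \<noteq> {}" by (auto simp: S_def)
    define H where "H = VS.span S"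
    have SC: "S \<subseteq> C" by (auto simp: S_def C_def cd_one_def uC vC cm_hi)
    have HC: "H \<subseteq> C" unfolding H_def by (rule VS.span_minimal[OF SC]) (simp add: C_def subspace_C)
    have closed: "\<forall>x\<in>H. \<forall>y\<in>H. cm \<alpha> \<beta> \<gamma> x y \<in> H"
      unfolding H_def by (rule span_mult_closed[OF prodS])
    have sub: "cd_subalgebra ?p H"
      unfolding cd_subalgebra_def carr mult using HC closed
      by (auto simp: H_def S_def intro: VS.span_base)
    have ass: "cd_associative_on ?p H"
      unfolding cd_associative_on_def mult
    proof (intro ballI)
      fix x y z assume "x \<in> H" "y \<in> H" "z \<in> H"
      then have "as3 \<alpha> \<beta> \<gamma> x y z = 0" unfolding H_def by (rule assoc_span[OF assS])
      then show "cm \<alpha> \<beta> \<gamma> (cm \<alpha> \<beta> \<gamma> x y) z = cm \<alpha> \<beta> \<gamma> x (cm \<alpha> \<beta> \<gamma> y z)"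
        by (simp add: as3_def)
    qed
    have dimH: "VS.dim H = 4" unfolding H_def using VS.dim_span_eq_card_independent[OF indS] cardS by simp
    define B0 where "B0 = cd_im ?p H"
    have B0q: "B0 \<in> quat_blocks ?p" unfolding quat_blocks_def B0_def using sub ass dimH by blast
    have "U \<subseteq> VS.span {u, v}" using BU(3) uv by simp
    also have "\<dots> \<subseteq> H" unfolding H_def by (rule VS.span_mono) (auto simp: S_def)
    finally have UH: "U \<subseteq> H" .
    have UB0: "U \<subseteq> B0" unfolding B0_def im[OF HC] using UH UV by auto
    show ?thesis
    proof (rule ex1I[of _ B0])
      show "B0 \<in> quat_blocks ?p \<and> U \<subseteq> B0" using B0q UB0 by simp
    next
      fix B assume B: "B \<in> quat_blocks ?p \<and> U \<subseteq> B"
      then obtain H' where H': "B = cd_im ?p H'" "cd_subalgebra ?p H'" "cd_associative_on ?p H'" "VS.dim H' = 4"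
        unfolding quat_blocks_def by blast
      from H'(2) have H'C: "H' \<subseteq> C" "VS.subspace H'" "cd_one \<in> H'"
        and H'cl: "\<forall>x\<in>H'. \<forall>y\<in>H'. cm \<alpha> \<beta> \<gamma> x y \<in> H'"
        unfolding cd_subalgebra_def carr mult by auto
      have "U \<subseteq> H'" using B H'(1) by (auto simp: cd_im_def)
      then have "u \<in> H'" "v \<in> H'" using uU vU by auto
      then have "S \<subseteq> H'" using H'C(3) H'cl by (auto simp: S_def)
      then have "H' = VS.span S" by (intro dim_fill) (use H'C(2) H'(4) cardS indS finS in auto)
      then show "B = B0" using H'(1) by (simp add: B0_def H_def)
    qed
  qed
  show ?thesis using part1 part2 part3 by blast
qed


end
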